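(* Let $n\ge 2$ be an integer. Suppose that for all integers $m,k$ with $2\le m\le n$ and $2\le k\le 2^{m-1}+1$ one has $$v_2\big(s(2^n,2^m-k)\big)=2^n-2^m-(n-m)\Big(2^m-2\Big\lfloor\frac{k}{2}\Big\rfloor\Big)+m-2-v_2\Big(\Big\lfloor\frac{k}{2}\Big\rfloor\Big)+(n-1)\epsilon_k,$$ where $\epsilon_k=0$ if $k$ is even and $\epsilon_k=1$ if $k$ is odd. Then for every integer $t$ with $1\le t\le 2^n$, $$v_2\big(s_{2^n}(2^n,t)\big)=v_2\big(s(2^n,t)\big)\quad\text{and}\quad v_2\big(s_{2^n}(2^n,t)-s(2^n,t)\big)\ge v_2\big(s(2^n,t)\big)+2.$$
   Context: The (unsigned) Stirling numbers of the first kind $s(n,k)$ are defined by $x(x+1)\cdots(x+n-1)=\sum_{k=0}^n s(n,k)x^k$. For a nonnegative integer $m$, $s_m(n,k)$ is defined by $(x+m)(x+m+1)\cdots(x+m+n-1)=\sum_{k=0}^n s_m(n,k)x^k$. $v_2$ is the $2$-adic valuation, with the convention $v_2(0)=+\infty$. *)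

theory Defs
  imports Complex_Main "HOL-Combinatorics.Stirling" "HOL-Computational_Algebra.Polynomial"
    "HOL-Computational_Algebra.Factorial_Ring" "HOL-Library.Extended_Real"
begin

text \<open>Unsigned Stirling numbers of the first kind s(n,k): library constant stirling n k.
  Shifted version s_m(n,k): coefficient of x^k in (x+m)(x+m+1)...(x+m+n-1).\<close>
definition stirling_shift :: "nat \<Rightarrow> nat \<Rightarrow> nat \<Rightarrow> nat" where
  "stirling_shift m n k = coeff (\<Prod>i<n. [: of_nat (m + i), 1 :]) k"

definition v2 :: "int \<Rightarrow> ereal" where
  "v2 x = (if x = 0 then \<infinity> else ereal (real (multiplicity (2::int) x)))"

end

theory Submission imports Defs begin

lemma shift_sum:
  "stirling_shift c N t = (\<Sum>k\<le>N. stirling N k * (if t \<le> k then (k choose t) * c^(k-t) else 0))"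
proof -
  have "(\<Prod>i<N. [: of_nat (c + i), 1 :]) = (pochhammer :: nat poly \<Rightarrow> _) [:of_nat c, 1:] N"
    unfolding pochhammer_prod by (rule prod.cong) (auto simp: of_nat_poly lessThan_atLeast0)
  also have "\<dots> = (\<Sum>k\<le>N. of_nat (stirling N k) * [:of_nat c, 1:] ^ k)"
    by (rule stirling_pochhammer[symmetric])
  finally have e: "(\<Prod>i<N. [: of_nat (c + i), 1 :]) = (\<Sum>k\<le>N. smult (stirling N k) ([:c, 1:] ^ k))"
    by (simp add: of_nat_poly of_nat_id)
  show ?thesis unfolding stirling_shift_def e coeff_sum
    by (rule sum.cong) (use degree_linear_power[of "c::nat"] in \<open>auto simp: coeff_linear_poly_power intro!: coeff_eq_0\<close>)
qed

definition blk :: "nat \<Rightarrow> nat" where "blk t = (LEAST m. t + 2 \<le> 2^m)"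

lemma blk_ub: "t + 2 \<le> 2 ^ blk t"
  unfolding blk_def by (rule LeastI[of _ "t+2"]) (use less_exp[of "t+2"] in linarith)

lemma blk_pos: "blk t \<ge> 1"
  using blk_ub[of t] by (cases "blk t") auto

lemma blk_lb: "2 ^ (blk t - 1) \<le> t + 1"
proof -
  have "blk t - 1 < blk t" using blk_pos[of t] by simp
  then have "\<not> (t + 2 \<le> 2 ^ (blk t - 1))" unfolding blk_def by (rule not_less_Least)
  thus ?thesis by simp
qed

lemma blk_eq: assumes "1 \<le> m" "2^(m-1) \<le> t+1" "t+2 \<le> 2^m" shows "blk t = m"
  unfolding blk_def
proof (rule Least_equality)
  show "t+2 \<le> 2^m" by fact
  fix y assume y: "t+2 \<le> (2::nat)^y"
  show "m \<le> y"
  proof (rule ccontr)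
    assume "\<not> m \<le> y"
    then have "y \<le> m - 1" by simp
    then have "(2::nat)^y \<le> 2^(m-1)" by (rule power_increasing) simp
    with assms(2) y show False by linarith
  qed
qed

lemma blk_ge2: assumes "1 \<le> t" shows "2 \<le> blk t"
proof (rule ccontr)
  assume "\<not> 2 \<le> blk t"
  then have "blk t \<le> 1" by simp
  then have "(2::nat) ^ blk t \<le> 2^1" by (rule power_increasing) simp
  with blk_ub[of t] assms show False by simp
qed

lemma blk_Suc: "blk (t+1) = (if t + 2 = 2 ^ blk t then blk t + 1 else blk t)"
proof (cases "t + 2 = 2 ^ blk t")
  case True
  have "blk (t+1) = blk t + 1"
  proof (rule blk_eq)
    show "2 ^ (blk t + 1 - 1) \<le> t + 1 + 1" using True by simp
    show "t + 1 + 2 \<le> 2 ^ (blk t + 1)" using True by simp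
  qed simp
  then show ?thesis using True by simp
next
  case False
  with blk_ub[of t] have "t + 3 \<le> 2 ^ blk t" by simp
  with blk_lb[of t] blk_pos[of t] False show ?thesis by (auto intro!: blk_eq)
qed

definition G :: "nat \<Rightarrow> nat \<Rightarrow> int" where
  "G n t = 2^n - 2^blk t + int (blk t) - 2 - (int n - int (blk t)) * int t"

lemma G_step: "G n t - G n (t+1) = int n - int (blk t)"
proof (cases "t + 2 = 2 ^ blk t")
  case True
  then have b: "blk (t+1) = blk t + 1" using blk_Suc[of t] by simp
  have "(2::int) ^ blk t = int t + 2" using arg_cong[where f=int, OF True] by simp
  then have "(2::int) ^ (blk t + 1) = 2 * (int t + 2)" by simp
  with \<open>(2::int) ^ blk t = int t + 2\<close> show ?thesis unfolding G_def b by (simp add: algebra_simps)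
next
  case False
  then have b: "blk (t+1) = blk t" using blk_Suc[of t] by simp
  show ?thesis unfolding G_def b by (simp add: algebra_simps)
qed

lemma G_mono: assumes "1 \<le> t" "t \<le> j" shows "G n t - G n j \<le> (int n - 2) * (int j - int t)"
  using assms(2)
proof (induction j rule: dec_induct)
  case base then show ?case by simp
next
  case (step j)
  have "G n t - G n (Suc j) = (G n t - G n j) + (G n j - G n (j+1))" by simp
  also have "\<dots> = (G n t - G n j) + (int n - int (blk j))" by (simp only: G_step)
  also have "\<dots> \<le> (int n - 2) * (int j - int t) + (int n - 2)"
    using step.IH blk_ge2[of j] step.hyps assms(1) by simp
  also have "\<dots> = (int n - 2) * (int (Suc j) - int t)" by (simp add: algebra_simps)
  finally show ?case .
qed

lemma stirling_pos: "1 \<le> t \<Longrightarrow> t \<le> N \<Longrightarrow> stirling N t > 0"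
proof (induction N arbitrary: t)
  case 0 then show ?case by simp
next
  case (Suc N)
  then obtain k where k: "t = Suc k" by (cases t) auto
  show ?case
  proof (cases "k = 0")
    case True then show ?thesis unfolding k True stirling_Suc_n_1 by simp
  next
    case False
    with Suc k have "stirling N k > 0" by simp
    then show ?thesis using k by simp
  qed
qed

lemma mult_bound:
  assumes "1 \<le> a" "a \<le> 2^j" shows "multiplicity (2::int) (int a) \<le> j"
proof -
  let ?v = "multiplicity (2::int) (int a)"
  have "(2::int) ^ ?v dvd int a" by (rule multiplicity_dvd)
  then have "(2::int) ^ ?v \<le> int a" using assms by (intro zdvd_imp_le) auto
  also have "\<dots> \<le> int (2 ^ j)" using assms(2) by (rule of_nat_mono)
  also have "\<dots> = 2 ^ j" by simp
  finally show ?thesis by (rule power_le_imp_le_exp[rotated]) simp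
qed


definition nu :: "nat \<Rightarrow> nat \<Rightarrow> nat" where
  "nu n t = multiplicity (2::int) (int (stirling (2^n) t))"

definition u :: "nat \<Rightarrow> nat \<Rightarrow> int" where
  "u n t = int (nu n t) - G n t"

lemma nu_dvd: "(2::int) ^ nu n t dvd int (stirling (2^n) t)"
  unfolding nu_def by (rule multiplicity_dvd)

lemma nu_not_dvd: "1 \<le> t \<Longrightarrow> t \<le> 2^n \<Longrightarrow> \<not> (2::int) ^ Suc (nu n t) dvd int (stirling (2^n) t)"
  unfolding nu_def using stirling_pos[of t "2^n"]
  by (subst power_dvd_iff_le_multiplicity) auto

lemma v2_stir: "1 \<le> t \<Longrightarrow> t \<le> 2^n \<Longrightarrow> v2 (int (stirling (2^n) t)) = ereal (real (nu n t))"
  using stirling_pos[of t "2^n"] by (simp add: v2_def nu_def)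

lemma blk_top1: "1 \<le> n \<Longrightarrow> blk (2^n - 1) = n + 1"
  by (rule blk_eq) (auto simp: Suc_le_eq)

lemma blk_top0: "1 \<le> n \<Longrightarrow> blk (2^n) = n + 1"
proof (rule blk_eq)
  assume "1 \<le> n"
  then have "(2::nat)^1 \<le> 2^n" by (intro power_increasing) auto
  then have "(2::nat) \<le> 2^n" by simp
  then show "2^n + 2 \<le> (2::nat)^(n+1)" by simp
qed auto

lemma nu_top0: "nu n (2^n) = 0"
  by (simp add: nu_def)

lemma half_aux: "(x::nat) = 2 * M \<Longrightarrow> x * (x - 1) div 2 = M * (x - 1)"
  by simp

lemma nu_top1: assumes "1 \<le> n" shows "nu n (2^n - 1) = n - 1"
proof -
  define M where "M = (2::nat)^n - 1"
  have M: "(2::nat)^n = Suc M" unfolding M_def by simp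
  have M1: "(2::nat)^n - 1 = M" unfolding M_def ..
  have "stirling (2^n) (2^n - 1) = stirling (Suc M) M" unfolding M1 unfolding M ..
  also have "\<dots> = Suc M choose 2" by (rule stirling_Suc_n_n)
  also have "\<dots> = Suc M * (Suc M - 1) div 2" by (rule choose_two)
  also have "\<dots> = 2^(n-1) * (Suc M - 1)"
  proof -
    have h0: "(2::nat)^n = 2 * 2^(n-1)" using assms by (cases n) simp_all
    have h: "Suc M = 2 * 2^(n-1)" unfolding M[symmetric] by (rule h0)
    show ?thesis by (rule half_aux[OF h])
  qed
  also have "\<dots> = 2^(n-1) * (2^n - 1)" unfolding M by simp
  finally have e: "int (stirling (2^n) (2^n - 1)) = 2^(n-1) * (2^n - 1)"
    by (simp add: of_nat_diff)
  have q: "odd ((2::int)^n - 1)" using assms by simp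
  show ?thesis unfolding nu_def e
  proof (rule multiplicity_eqI)
    show "(2::int) ^ (n-1) dvd 2 ^ (n - 1) * (2 ^ n - 1)" by simp
    show "\<not> (2::int) ^ Suc (n-1) dvd 2 ^ (n - 1) * (2 ^ n - 1)"
    proof
      assume "(2::int) ^ Suc (n-1) dvd 2 ^ (n - 1) * (2 ^ n - 1)"
      then have "2 ^ (n-1) * 2 dvd (2::int) ^ (n - 1) * (2 ^ n - 1)" by (simp add: mult.commute)
      then have "(2::int) dvd 2 ^ n - 1" by (subst (asm) dvd_times_left_cancel_iff) auto
      with q show False by simp
    qed
  qed
qed

lemma u_top1: "1 \<le> n \<Longrightarrow> u n (2^n - 1) = 1"
proof -
  assume n: "1 \<le> n"
  have "(2::int)^(n+1) = 2 * 2^n" by simp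
  moreover have "int (2^n - 1) = 2^n - 1" by (simp add: of_nat_diff)
  ultimately show ?thesis using n unfolding u_def G_def nu_top1[OF n] blk_top1[OF n]
    by (simp add: of_nat_diff algebra_simps)
qed

lemma u_top0: "1 \<le> n \<Longrightarrow> u n (2^n) = 1 - int n"
proof -
  assume n: "1 \<le> n"
  have "(2::int)^(n+1) = 2 * 2^n" by simp
  then show ?thesis using n unfolding u_def G_def nu_top0 blk_top0[OF n]
    by (simp add: algebra_simps)
qed


definition Hyp :: "nat \<Rightarrow> bool" where
  "Hyp n = (\<forall>m k. 2 \<le> m \<and> m \<le> n \<and> 2 \<le> k \<and> k \<le> 2 ^ (m - 1) + 1 \<longrightarrow>
      v2 (int (stirling (2 ^ n) (2 ^ m - k))) =
        ereal (real_of_int (2 ^ n - 2 ^ m - (int n - int m) * (2 ^ m - 2 * int (k div 2))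
                 + int m - 2 + (int n - 1) * (if even k then 0 else 1)))
        - v2 (int (k div 2)))"

lemma alg_id: fixes P Q T E V nn mm :: int
  shows "(P - Q - (nn - mm)*(Q - (Q - T - E)) + mm - 2 + (nn - 1)*E - V) - (P - Q + mm - 2 - (nn - mm)*T) = (mm - 1)*E - V"
  by (simp add: algebra_simps)

lemma u_mid:
  assumes H: "Hyp n" and t1: "1 \<le> t" and tn: "t + 2 \<le> 2^n"
  shows "u n t = int (blk t - 1) * int (t mod 2) - int (multiplicity (2::int) (int ((2^blk t - t) div 2)))
    \<and> 1 \<le> (2^blk t - t) div 2 \<and> (2^blk t - t) div 2 \<le> 2^(blk t - 2) \<and> 2 \<le> blk t"
proof -
  define m where "m = blk t"
  define k where "k = 2^m - t"
  define a where "a = k div 2"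
  have m2: "2 \<le> m" unfolding m_def using blk_ge2 t1 by simp
  have lb: "2^(m-1) \<le> t + 1" unfolding m_def by (rule blk_lb)
  have ub: "t + 2 \<le> 2^m" unfolding m_def by (rule blk_ub)
  have mn: "m \<le> n"
  proof -
    have "(2::nat)^(m-1) < 2^n" using lb tn by linarith
    then have "m - 1 < n" using power_less_imp_less_exp[of 2 "m-1" n] by simp
    then show ?thesis by simp
  qed
  have mm0: "m = Suc (Suc (m - 2))" using m2 by simp
  obtain m' where mm: "m = Suc (Suc m')" using mm0 by blast
  have pm: "(2::nat)^m = 2 * 2^(m-1)" unfolding mm by simp
  have k2: "2 \<le> k" unfolding k_def using ub by simp
  have kb: "k \<le> 2^(m-1) + 1" unfolding k_def using pm lb by simp
  have tk: "2^m - k = t" unfolding k_def using ub by simp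
  have a1: "1 \<le> a" unfolding a_def using k2 by simp
  have pm2: "(2::nat)^(m-1) = 2 * 2^(m-2)" unfolding mm by simp
  have ab: "a \<le> 2^(m-2)" unfolding a_def using kb pm2 by simp
  have inst: "v2 (int (stirling (2 ^ n) t)) =
        ereal (real_of_int (2 ^ n - 2 ^ m - (int n - int m) * (2 ^ m - 2 * int a)
                 + int m - 2 + (int n - 1) * (if even k then 0 else 1)))
        - v2 (int a)"
  proof -
    have c: "2 \<le> m \<and> m \<le> n \<and> 2 \<le> k \<and> k \<le> 2 ^ (m - 1) + 1" using m2 mn k2 kb by simp
    note h = H[unfolded Hyp_def, THEN spec[of _ m], THEN spec[of _ k], THEN mp, OF c]
    show ?thesis using h unfolding tk a_def .
  qed
  have tle: "t \<le> 2^n" using tn by simp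
  have va: "v2 (int a) = ereal (real (multiplicity (2::int) (int a)))" using a1 by (simp add: v2_def)
  from inst have "real (nu n t) = real_of_int (2 ^ n - 2 ^ m - (int n - int m) * (2 ^ m - 2 * int a)
                 + int m - 2 + (int n - 1) * (if even k then 0 else 1)) - real (multiplicity (2::int) (int a))"
    unfolding v2_stir[OF t1 tle] va by simp
  then have nuv: "int (nu n t) = (2 ^ n - 2 ^ m - (int n - int m) * (2 ^ m - 2 * int a)
                 + int m - 2 + (int n - 1) * (if even k then 0 else 1)) - int (multiplicity (2::int) (int a))"
    by linarith
  have ev: "even (k + t)" unfolding k_def using ub m2 by simp
  have kt: "k mod 2 = t mod 2" using ev by presburger
  have "k = 2 * a + t mod 2" unfolding a_def using div_mult_mod_eq[of k 2] kt by linarith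
  then have ai: "2 * int a = int k - int (t mod 2)" by linarith
  have ki: "int k = 2^m - int t" unfolding k_def using ub by (simp add: of_nat_diff)
  have par: "(if even k then 0 else 1) = int (t mod 2)" using kt by (auto simp: even_iff_mod_2_eq_zero)
  have ai2: "2 * int a = 2^m - int t - int (t mod 2)" using ai ki by simp
  have nuv2: "int (nu n t) = 2^n - 2^m - (int n - int m)*(2^m - (2^m - int t - int (t mod 2))) + int m - 2 + (int n - 1)*int (t mod 2) - int (multiplicity (2::int) (int a))"
    using nuv unfolding ai2 par .
  have G: "G n t = 2^n - 2^m + int m - 2 - (int n - int m) * int t" unfolding G_def m_def ..
  have u0: "u n t = (int m - 1) * int (t mod 2) - int (multiplicity (2::int) (int a))"
    unfolding u_def nuv2 G by (rule alg_id)
  have mi: "int (m - 1) = int m - 1" using m2 by simp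
  have u1: "u n t = int (m - 1) * int (t mod 2) - int (multiplicity (2::int) (int a))"
    unfolding mi by (rule u0)
  show ?thesis unfolding m_def[symmetric] k_def[symmetric] a_def[symmetric]
    using u1 a1 ab m2 by (intro conjI)
qed


lemma u_bounds:
  assumes H: "Hyp n" and n2: "2 \<le> n" and t1: "1 \<le> t" and tn: "t \<le> 2^n"
  shows "u n t \<le> int (blk t) - 1 \<and> 2 - int (blk t) \<le> u n t \<and> (even t \<longrightarrow> u n t \<le> 0) \<and> (odd t \<longrightarrow> 1 \<le> u n t)"
proof (cases "t + 2 \<le> 2^n")
  case True
  note M = u_mid[OF H t1 True]
  define v where "v = multiplicity (2::int) (int ((2^blk t - t) div 2))"
  have v: "v \<le> blk t - 2" unfolding v_def using M by (intro mult_bound) auto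
  have uu: "u n t = int (blk t - 1) * int (t mod 2) - int v" using M unfolding v_def by simp
  have b2: "2 \<le> blk t" using M by simp
  have vi: "int v \<le> int (blk t) - 2" using v b2 by linarith
  show ?thesis
  proof (cases "even t")
    case True
    then have "t mod 2 = 0" by presburger
    then have "u n t = - int v" using uu by simp
    then show ?thesis using vi True b2 by simp
  next
    case False
    then have "t mod 2 = 1" by presburger
    then have "u n t = int (blk t) - 1 - int v" using uu b2 by (simp add: of_nat_diff)
    then show ?thesis using vi False b2 by simp
  qed
next
  case False
  have n1: "1 \<le> n" using n2 by simp
  have "t = 2^n - 1 \<or> t = 2^n" using False tn by auto
  moreover have "odd ((2::nat)^n - 1)" using n1 by simp
  moreover have "even ((2::nat)^n)" using n1 by simp
  ultimately show ?thesis using u_top1[OF n1] u_top0[OF n1] blk_top1[OF n1] blk_top0[OF n1] n1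
    by auto
qed

lemma u_step:
  assumes H: "Hyp n" and n2: "2 \<le> n" and t1: "1 \<le> t" and tn: "t + 1 \<le> 2^n" and o: "odd t"
  shows "u n t - u n (t+1) = int (blk t) - 1"
proof (cases "t + 3 \<le> 2^n")
  case True
  have b: "blk (t+1) = blk t"
  proof -
    have ev0: "even ((2::nat) ^ blk t)" using blk_pos[of t] by simp
    have "t + 2 \<noteq> 2 ^ blk t"
    proof
      assume eq: "t + 2 = 2 ^ blk t"
      have "even (t + 2)" by (subst eq) (rule ev0)
      with o show False by simp
    qed
    then show ?thesis using blk_Suc[of t] by simp
  qed
  have A: "u n t = int (blk t - 1) * int (t mod 2) - int (multiplicity (2::int) (int ((2^blk t - t) div 2)))"
    using u_mid[OF H t1] True by simp
  have B: "u n (t+1) = int (blk t - 1) * int ((t+1) mod 2) - int (multiplicity (2::int) (int ((2^blk t - (t+1)) div 2)))"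
    using u_mid[OF H, of "t+1"] True b by simp
  have ub: "t + 2 \<le> 2 ^ blk t" by (rule blk_ub)
  have ev: "even ((2::nat) ^ blk t)" using blk_pos[of t] by simp
  have "(2^blk t - (t+1)) div 2 = (2^blk t - t) div 2" using o ev ub by presburger
  moreover have "t mod 2 = 1" "(t+1) mod 2 = 0" using o by presburger+
  ultimately show ?thesis using A B blk_pos[of t] by (simp add: of_nat_diff)
next
  case False
  have n1: "1 \<le> n" using n2 by simp
  have ev0: "even ((2::nat) ^ n)" using n1 by simp
  have "t + 2 \<noteq> 2^n"
  proof
    assume eq: "t + 2 = 2 ^ n"
    have "even (t + 2)" by (subst eq) (rule ev0)
    with o show False by simp
  qed
  then have "t = 2^n - 1" using False tn by auto
  then show ?thesis using u_top1[OF n1] u_top0[OF n1] blk_top1[OF n1] n1 by simp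
qed


lemma key:
  assumes H: "Hyp n" and n2: "2 \<le> n" and t1: "1 \<le> t" and tj: "t < j" and jn: "j \<le> 2^n"
  shows "(j = t+1 \<and> odd t \<longrightarrow> int (nu n t) = int (nu n j) + int n - 1) \<and>
         (\<not> (j = t+1 \<and> odd t) \<longrightarrow> int (nu n t) + 2 \<le> int (nu n j) + int n * (int j - int t))"
proof -
  have nu_eq: "\<And>s. int (nu n s) = G n s + u n s" by (simp add: u_def)
  have g1: "G n t - G n (t+1) = int n - int (blk t)" by (rule G_step)
  have b2t: "2 \<le> blk t" using blk_ge2 t1 by simp
  show ?thesis
  proof (cases "j = t + 1")
    case True
    show ?thesis
    proof (cases "odd t")
      case o: True
      have "u n t - u n (t+1) = int (blk t) - 1" using u_step[OF H n2 t1 _ o] jn True by simp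
      then show ?thesis using g1 nu_eq[of t] nu_eq[of "t+1"] True o by simp
    next
      case e: False
      have a: "u n t \<le> 0" using u_bounds[OF H n2 t1] jn tj e by simp
      have b: "1 \<le> u n (t+1)" using u_bounds[OF H n2, of "t+1"] jn True e by simp
      show ?thesis using g1 nu_eq[of t] nu_eq[of "t+1"] True e a b b2t by simp
    qed
  next
    case False
    then have j2: "t + 2 \<le> j" using tj by simp
    have g2: "G n (t+1) - G n (j-1) \<le> (int n - 2) * (int (j-1) - int (t+1))"
      by (rule G_mono) (use j2 in auto)
    have g3: "G n (j-1) - G n j = int n - int (blk (j-1))"
      using G_step[of n "j-1"] j2 by simp
    have ut: "u n t \<le> int (blk t) - 1" using u_bounds[OF H n2 t1] jn tj by simp
    have uj: "2 - int (blk j) \<le> u n j" using u_bounds[OF H n2, of j] jn tj t1 by simp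
    have bj: "blk j \<le> blk (j-1) + 1" using blk_Suc[of "j-1"] j2 by (simp split: if_splits)
    define d where "d = int j - int t - 2"
    have d0: "0 \<le> d" unfolding d_def using j2 by simp
    have e1: "(int n - 2) * (int (j-1) - int (t+1)) = (int n - 2) * d" unfolding d_def using j2 by (simp add: of_nat_diff)
    have e2: "int n * (int j - int t) = int n * d + 2 * int n" unfolding d_def by (simp add: algebra_simps)
    have e3: "(int n - 2) * d \<le> int n * d" using d0 by (intro mult_right_mono) auto
    have "int (nu n t) - int (nu n j) = (G n t - G n (t+1)) + (G n (t+1) - G n (j-1)) + (G n (j-1) - G n j) + u n t - u n j"
      using nu_eq[of t] nu_eq[of j] by simp
    then show ?thesis using g1 g2 g3 ut uj bj e1 e2 e3 False by linarith
  qed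
qed


lemma shift_split:
  assumes "t \<le> N"
  shows "stirling_shift c N t = stirling N t + (\<Sum>k\<in>{Suc t..N}. stirling N k * (k choose t) * c^(k-t))"
proof -
  define f where "f k = stirling N k * (if t \<le> k then (k choose t) * c^(k-t) else 0)" for k
  have "stirling_shift c N t = (\<Sum>k\<le>N. f k)" unfolding f_def by (rule shift_sum)
  also have "\<dots> = (\<Sum>k\<in>{t..N}. f k)"
    by (rule sum.mono_neutral_cong_right) (auto simp: f_def)
  also have "\<dots> = f t + (\<Sum>k\<in>{Suc t..N}. f k)" by (rule sum.atLeast_Suc_atMost) (rule assms)
  also have "(\<Sum>k\<in>{Suc t..N}. f k) = (\<Sum>k\<in>{Suc t..N}. stirling N k * (k choose t) * c^(k-t))"
    by (rule sum.cong) (auto simp: f_def)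
  finally show ?thesis by (simp add: f_def)
qed

theorem lemma2p4:
  fixes n :: nat
  assumes "n \<ge> 2"
    and "\<forall>m k. 2 \<le> m \<and> m \<le> n \<and> 2 \<le> k \<and> k \<le> 2 ^ (m - 1) + 1 \<longrightarrow>
      v2 (int (stirling (2 ^ n) (2 ^ m - k))) =
        ereal (real_of_int (2 ^ n - 2 ^ m - (int n - int m) * (2 ^ m - 2 * int (k div 2))
                 + int m - 2 + (int n - 1) * (if even k then 0 else 1)))
        - v2 (int (k div 2))"
  shows "\<forall>t. 1 \<le> t \<and> t \<le> 2 ^ n \<longrightarrow>
      v2 (int (stirling_shift (2 ^ n) (2 ^ n) t)) = v2 (int (stirling (2 ^ n) t)) \<and>
      v2 (int (stirling_shift (2 ^ n) (2 ^ n) t) - int (stirling (2 ^ n) t))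
        \<ge> v2 (int (stirling (2 ^ n) t)) + 2"
proof (intro allI impI)
  fix t :: nat assume tt: "1 \<le> t \<and> t \<le> 2 ^ n"
  have t1: "1 \<le> t" and tn: "t \<le> 2^n" using tt by auto
  have n2: "2 \<le> n" by fact
  have H: "Hyp n" unfolding Hyp_def using assms(2) .
  define N where "N = (2::nat)^n"
  define R where "R = (\<Sum>k\<in>{Suc t..N}. stirling N k * (k choose t) * N^(k-t))"
  define S where "S = stirling_shift N N t"
  define s where "s = stirling N t"
  have SR: "S = s + R" unfolding S_def s_def R_def using tn N_def by (intro shift_split) simp
  have s0: "s > 0" unfolding s_def N_def using t1 tn by (rule stirling_pos)
  have dR: "(2::int)^(nu n t + 2) dvd int R"
    unfolding R_def of_nat_sum
  proof (rule dvd_sum)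
    fix k assume k: "k \<in> {Suc t..N}"
    then have tk: "t < k" and kN: "k \<le> 2^n" unfolding N_def by auto
    note K = key[OF H n2 t1 tk kN]
    have eq: "int (stirling N k * (k choose t) * N ^ (k - t)) = int (stirling (2^n) k) * int (k choose t) * (2::int) ^ (n * (k - t))"
      unfolding N_def by (simp add: power_mult)
    have "(2::int)^(nu n t + 2) dvd int (stirling (2^n) k) * int (k choose t) * (2::int) ^ (n * (k - t))"
    proof (cases "k = t + 1 \<and> odd t")
      case True
      then have kk: "k = t + 1" and o: "odd t" by auto
      have e1: "nu n t + 2 = nu n k + 1 + n * (k - t)" using K True n2 kk by simp
      have d2: "(2::int) ^ 1 dvd int (k choose t)" using o kk by simp
      show ?thesis unfolding e1 power_add
        by (intro mult_dvd_mono nu_dvd d2) simp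
    next
      case False
      have e1: "nu n t + 2 \<le> nu n k + n * (k - t)"
      proof -
        have "int (nu n t) + 2 \<le> int (nu n k) + int n * (int k - int t)" using K False by simp
        moreover have "int n * (int k - int t) = int (n * (k - t))" using tk by (simp add: of_nat_diff)
        ultimately show ?thesis by linarith
      qed
      have "(2::int) ^ (nu n k + n * (k - t)) dvd int (stirling (2^n) k) * int (k choose t) * 2 ^ (n * (k - t))"
        unfolding power_add by (intro mult_dvd_mono dvd_mult2 nu_dvd) simp_all
      then show ?thesis by (rule dvd_trans[rotated]) (rule le_imp_power_dvd[OF e1])
    qed
    then show "(2::int)^(nu n t + 2) dvd int (stirling N k * (k choose t) * N ^ (k - t))"
      unfolding eq .
  qed
  have dS: "(2::int)^(nu n t) dvd int s" unfolding s_def N_def by (rule nu_dvd)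
  have ndS: "\<not> (2::int)^Suc (nu n t) dvd int s" unfolding s_def N_def by (rule nu_not_dvd[OF t1 tn])
  have dR0: "(2::int)^(nu n t) dvd int R" using dR by (rule dvd_trans[rotated]) (rule le_imp_power_dvd, simp)
  have dR1: "(2::int)^Suc (nu n t) dvd int R" using dR by (rule dvd_trans[rotated]) (rule le_imp_power_dvd, simp)
  have iS: "int S = int s + int R" using SR by simp
  have mS: "multiplicity (2::int) (int S) = nu n t"
  proof (rule multiplicity_eqI)
    show "(2::int)^(nu n t) dvd int S" unfolding iS using dS dR0 by (rule dvd_add)
    show "\<not> (2::int)^Suc (nu n t) dvd int S"
    proof
      assume "(2::int)^Suc (nu n t) dvd int S"
      then have "(2::int)^Suc (nu n t) dvd int S - int R" using dR1 by (rule dvd_diff)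
      then show False using ndS iS by simp
    qed
  qed
  have vs: "v2 (int s) = ereal (real (nu n t))" unfolding s_def N_def by (rule v2_stir[OF t1 tn])
  have S0: "S \<noteq> 0" using SR s0 by simp
  have goal1: "v2 (int S) = v2 (int s)" unfolding vs using S0 by (simp add: v2_def mS)
  have goal2: "v2 (int S - int s) \<ge> v2 (int s) + 2"
  proof (cases "R = 0")
    case True
    then show ?thesis unfolding iS by (simp add: v2_def)
  next
    case False
    then have "int R \<noteq> 0" by simp
    then have "multiplicity (2::int) (int R) \<ge> nu n t + 2"
      using dR by (intro multiplicity_geI) auto
    then show ?thesis unfolding iS vs using False by (simp add: v2_def)
  qed
  show "v2 (int (stirling_shift (2 ^ n) (2 ^ n) t)) = v2 (int (stirling (2 ^ n) t)) \<and>
      v2 (int (stirling_shift (2 ^ n) (2 ^ n) t) - int (stirling (2 ^ n) t))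
        \<ge> v2 (int (stirling (2 ^ n) t)) + 2"
    using goal1 goal2 unfolding S_def s_def N_def by simp
qed

end
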